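(* Let $D$ be an $n\times n$ distance matrix and let $q_0$ be the smallest $q\in\mathbb N$ such that $D^{(q)}=D$. Then there exists a graph realisation $(G=(V,E),\Phi)$ of $D$ with $$|V|\le n+\sum_{\substack{1\le i<j\le n\\ 2\le D_{ij}\le q_0}}(D_{ij}-1).$$
   Context: $[n]=\{1,\dots,n\}$. An $n\times n$ matrix $D$ with non-negative integer entries is a distance matrix if (i) $D_{ii}=0$ for all $i$ and $D_{ij}>0$ for all $i\ne j$; (ii) $D$ is symmetric; (iii) $D_{iw}+D_{wj}\ge D_{ij}$ for all $i,j,w\in[n]$. For $q\in\mathbb N$, the $q$-skeleton $G^q$ of $D$ is the edge-weighted graph with vertex set $[n]$ having an edge $\{i,j\}$ ($i<j$) if and only if $D_{ij}\le q$, this edge having weight (length) $D_{ij}$. $D^{(q)}$ denotes the $n\times n$ matrix whose $(i,j)$ entry is the weighted shortest-path distance between $i$ and $j$ in $G^q$ (equal to $\infty$ if no path exists). A graph realisation of $D$ is a pair $(G,\Phi)$, where $G=(V,E)$ is a finite simple undirected unweighted graph and $\Phi:[n]\to V$ is an injective map such that $d_G(\Phi(i),\Phi(j))=D_{ij}$ for all $i,j\in[n]$; here $d_G$ denotes the shortest-path distance in $G$ (equal to $\infty$ if no path exists). *)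

theory Defs
  imports Main "HOL-Library.Extended_Nat"
begin

text \<open>Matrices are functions nat \<Rightarrow> nat \<Rightarrow> nat, only the entries with indices in {1..n} matter.\<close>

definition is_dist_matrix :: "nat \<Rightarrow> (nat \<Rightarrow> nat \<Rightarrow> nat) \<Rightarrow> bool" where
  "is_dist_matrix n D \<longleftrightarrow>
     (\<forall>i\<in>{1..n}. D i i = 0) \<and>
     (\<forall>i\<in>{1..n}. \<forall>j\<in>{1..n}. i \<noteq> j \<longrightarrow> D i j > 0) \<and>
     (\<forall>i\<in>{1..n}. \<forall>j\<in>{1..n}. D i j = D j i) \<and>
     (\<forall>i\<in>{1..n}. \<forall>j\<in>{1..n}. \<forall>w\<in>{1..n}. D i w + D w j \<ge> D i j)"

text \<open>Walks in the q-skeleton G^q: vertex lists in [n] whose consecutive vertices are distinct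
  and joined by an edge, i.e. D entry at most q.\<close>
definition skel_walk :: "nat \<Rightarrow> (nat \<Rightarrow> nat \<Rightarrow> nat) \<Rightarrow> nat \<Rightarrow> nat list \<Rightarrow> bool" where
  "skel_walk n D q xs \<longleftrightarrow> xs \<noteq> [] \<and> set xs \<subseteq> {1..n} \<and>
     (\<forall>k < length xs - 1. xs ! k \<noteq> xs ! Suc k \<and> D (xs ! k) (xs ! Suc k) \<le> q)"

definition walk_weight :: "(nat \<Rightarrow> nat \<Rightarrow> nat) \<Rightarrow> nat list \<Rightarrow> nat" where
  "walk_weight D xs = (\<Sum>k < length xs - 1. D (xs ! k) (xs ! Suc k))"

text \<open>D^(q)_{ij}: weighted shortest path distance in G^q (\<infinity> if no path).\<close>
definition skel_dist :: "nat \<Rightarrow> (nat \<Rightarrow> nat \<Rightarrow> nat) \<Rightarrow> nat \<Rightarrow> nat \<Rightarrow> nat \<Rightarrow> enat" where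
  "skel_dist n D q i j = (INF xs \<in> {xs. skel_walk n D q xs \<and> hd xs = i \<and> last xs = j}.
       enat (walk_weight D xs))"

definition skel_eq :: "nat \<Rightarrow> (nat \<Rightarrow> nat \<Rightarrow> nat) \<Rightarrow> nat \<Rightarrow> bool" where
  "skel_eq n D q \<longleftrightarrow> (\<forall>i\<in>{1..n}. \<forall>j\<in>{1..n}. skel_dist n D q i j = enat (D i j))"

definition simple_graph :: "'v set \<Rightarrow> 'v set set \<Rightarrow> bool" where
  "simple_graph V E \<longleftrightarrow> finite V \<and> (\<forall>e\<in>E. \<exists>a b. a \<noteq> b \<and> a \<in> V \<and> b \<in> V \<and> e = {a, b})"

definition graph_walk :: "'v set \<Rightarrow> 'v set set \<Rightarrow> 'v list \<Rightarrow> bool" where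
  "graph_walk V E xs \<longleftrightarrow> xs \<noteq> [] \<and> set xs \<subseteq> V \<and>
     (\<forall>k < length xs - 1. {xs ! k, xs ! Suc k} \<in> E)"

definition graph_dist :: "'v set \<Rightarrow> 'v set set \<Rightarrow> 'v \<Rightarrow> 'v \<Rightarrow> enat" where
  "graph_dist V E u v = (INF xs \<in> {xs. graph_walk V E xs \<and> hd xs = u \<and> last xs = v}.
       enat (length xs - 1))"

definition graph_realisation :: "nat \<Rightarrow> (nat \<Rightarrow> nat \<Rightarrow> nat) \<Rightarrow> 'v set \<Rightarrow> 'v set set \<Rightarrow> (nat \<Rightarrow> 'v) \<Rightarrow> bool" where
  "graph_realisation n D V E \<Phi> \<longleftrightarrow> simple_graph V E \<and> inj_on \<Phi> {1..n} \<and> \<Phi> ` {1..n} \<subseteq> V \<and>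
     (\<forall>i\<in>{1..n}. \<forall>j\<in>{1..n}. graph_dist V E (\<Phi> i) (\<Phi> j) = enat (D i j))"

end

theory Submission
  imports Defs "HOL-Library.Nat_Bijection"
begin

lemma gw_single: "graph_walk V E [x] \<longleftrightarrow> x \<in> V"
  by (simp add: graph_walk_def)

lemma gw_cons: "graph_walk V E (x#y#r) \<longleftrightarrow> x \<in> V \<and> {x,y} \<in> E \<and> graph_walk V E (y#r)"
  apply (simp add: graph_walk_def)
  apply (auto simp: less_Suc_eq_0_disj)
  done

lemma sw_single: "skel_walk n D q [x] \<longleftrightarrow> x \<in> {1..n}"
  by (simp add: skel_walk_def)

lemma sw_cons: "skel_walk n D q (x#y#r) \<longleftrightarrow> x \<in> {1..n} \<and> x \<noteq> y \<and> D x y \<le> q \<and> skel_walk n D q (y#r)"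
  apply (simp add: skel_walk_def)
  apply (auto simp: less_Suc_eq_0_disj)
  done

lemma ww_single: "walk_weight D [x] = 0"
  by (simp add: walk_weight_def)

lemma ww_cons: "walk_weight D (x#y#r) = D x y + walk_weight D (y#r)"
proof -
  have "walk_weight D (x#y#r) = (\<Sum>k < Suc (length r). D ((x#y#r) ! k) ((x#y#r) ! Suc k))"
    by (simp add: walk_weight_def)
  also have "\<dots> = D x y + (\<Sum>k < length r. D ((y#r) ! k) ((y#r) ! Suc k))"
    by (subst sum.lessThan_Suc_shift) simp
  finally show ?thesis by (simp add: walk_weight_def)
qed

lemma enat_INF_attained:
  assumes "(INF x \<in> S. enat (f x)) = enat d"
  shows "\<exists>x\<in>S. f x = d"
proof -
  have ne: "S \<noteq> {}" using assms by (auto simp: top_enat_def)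
  have "enat d \<in> (\<lambda>x. enat (f x)) ` S"
    using assms ne unfolding Inf_enat_def by (metis (mono_tags, lifting) LeastI_ex image_is_empty ex_in_conv)
  thus ?thesis by auto
qed

definition reach :: "'v set \<Rightarrow> 'v set set \<Rightarrow> 'v \<Rightarrow> 'v \<Rightarrow> nat \<Rightarrow> bool" where
  "reach V E x y L \<longleftrightarrow> (\<exists>xs. graph_walk V E xs \<and> hd xs = x \<and> last xs = y \<and> length xs - 1 = L)"

lemma reach_refl: "x \<in> V \<Longrightarrow> reach V E x x 0"
  unfolding reach_def by (rule exI[of _ "[x]"]) (simp add: gw_single)

lemma reach_cons: "x \<in> V \<Longrightarrow> {x,y} \<in> E \<Longrightarrow> reach V E y z L \<Longrightarrow> reach V E x z (Suc L)"
  unfolding reach_def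
proof (elim exE conjE)
  fix xs assume a: "x \<in> V" "{x,y} \<in> E" "graph_walk V E xs" "hd xs = y" "last xs = z" "length xs - 1 = L"
  then obtain r where xs: "xs = y # r" by (cases xs) (auto simp: graph_walk_def)
  show "\<exists>xs. graph_walk V E xs \<and> hd xs = x \<and> last xs = z \<and> length xs - 1 = Suc L"
    by (rule exI[of _ "x # xs"]) (use a xs in \<open>auto simp: gw_cons\<close>)
qed

lemma walk_reach_trans:
  "graph_walk V E xs \<Longrightarrow> reach V E (last xs) z L2 \<Longrightarrow> reach V E (hd xs) z (length xs - 1 + L2)"
proof (induction xs rule: induct_list012)
  case 1 then show ?case by (simp add: graph_walk_def)
next
  case (2 x) then show ?case by simp
next
  case (3 x y r)
  have "reach V E y z (length (y#r) - 1 + L2)" using 3 by (simp add: gw_cons)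
  then have "reach V E x z (Suc (length (y#r) - 1 + L2))"
    using 3(3) by (intro reach_cons) (auto simp: gw_cons)
  then show ?case by simp
qed

lemma reach_trans: "reach V E x y L1 \<Longrightarrow> reach V E y z L2 \<Longrightarrow> reach V E x z (L1 + L2)"
  using walk_reach_trans unfolding reach_def[of V E x y] by fastforce

lemma reach_dist: "reach V E x y L \<Longrightarrow> graph_dist V E x y \<le> enat L"
  unfolding reach_def graph_dist_def by (auto intro: INF_lower2)

lemma skel_walk_lower:
  assumes dm: "is_dist_matrix n D"
  shows "skel_walk n D q xs \<Longrightarrow> D (hd xs) (last xs) \<le> walk_weight D xs"
proof (induction xs rule: induct_list012)
  case 1 then show ?case by (simp add: skel_walk_def)
next
  case (2 x) then show ?case using dm by (simp add: is_dist_matrix_def skel_walk_def)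
next
  case (3 x y r)
  have ih: "D y (last (y#r)) \<le> walk_weight D (y#r)" using 3 by (simp add: sw_cons)
  have "last (y#r) \<in> set (x#y#r)" by simp
  then have "last (y#r) \<in> {1..n}" using 3(3) unfolding skel_walk_def by blast
  moreover have "x \<in> {1..n}" "y \<in> {1..n}" using 3(3) unfolding sw_cons skel_walk_def by auto
  ultimately have "D x (last (y#r)) \<le> D x y + D y (last (y#r))"
    using dm unfolding is_dist_matrix_def by blast
  then show ?case using ih by (simp add: ww_cons)
qed

lemma skel_eq_exists:
  assumes dm: "is_dist_matrix n D"
  shows "\<exists>q. skel_eq n D q"
proof -
  define Q where "Q = (\<Sum>i\<in>{1..n}. \<Sum>j\<in>{1..n}. D i j)"
  have le: "D i j \<le> Q" if "i \<in> {1..n}" "j \<in> {1..n}" for i j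
  proof -
    have "D i j \<le> (\<Sum>j\<in>{1..n}. D i j)" using that by (intro member_le_sum) auto
    also have "\<dots> \<le> Q" unfolding Q_def using that by (intro member_le_sum[where f = "\<lambda>i. \<Sum>j\<in>{1..n}. D i j"]) auto
    finally show ?thesis .
  qed
  have "skel_eq n D Q"
    unfolding skel_eq_def
  proof (intro ballI antisym)
    fix i j assume ij: "i \<in> {1..n}" "j \<in> {1..n}"
    show "enat (D i j) \<le> skel_dist n D Q i j"
      unfolding skel_dist_def using skel_walk_lower[OF dm] by (auto intro!: INF_greatest)
    show "skel_dist n D Q i j \<le> enat (D i j)"
    proof (cases "i = j")
      case True
      have "skel_walk n D Q [i]" using ij by (simp add: sw_single)
      then show ?thesis unfolding skel_dist_def using True dm ij
        by (intro INF_lower2[of "[i]"]) (auto simp: ww_single is_dist_matrix_def)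
    next
      case False
      have "skel_walk n D Q [i,j]" using ij False le by (simp add: sw_cons sw_single)
      then show ?thesis unfolding skel_dist_def
        by (intro INF_lower2[of "[i,j]"]) (auto simp: ww_cons ww_single)
    qed
  qed
  then show ?thesis by blast
qed


definition Pset :: "nat \<Rightarrow> (nat \<Rightarrow> nat \<Rightarrow> nat) \<Rightarrow> nat \<Rightarrow> (nat \<times> nat) set" where
  "Pset n D q = {(i,j). 1 \<le> i \<and> i < j \<and> j \<le> n \<and> D i j \<le> q}"
definition enc :: "nat \<Rightarrow> nat \<times> nat \<Rightarrow> nat \<Rightarrow> nat" where
  "enc n p t = n + 1 + prod_encode (prod_encode p, t)"
definition pv :: "nat \<Rightarrow> (nat \<Rightarrow> nat \<Rightarrow> nat) \<Rightarrow> nat \<times> nat \<Rightarrow> nat \<Rightarrow> nat" where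
  "pv n D p t = (if t = 0 then fst p else if t = D (fst p) (snd p) then snd p else enc n p t)"
definition Vs :: "nat \<Rightarrow> (nat \<Rightarrow> nat \<Rightarrow> nat) \<Rightarrow> nat \<Rightarrow> nat set" where
  "Vs n D q = {1..n} \<union> (\<Union>p\<in>Pset n D q. enc n p ` {1..<D (fst p) (snd p)})"
definition Es :: "nat \<Rightarrow> (nat \<Rightarrow> nat \<Rightarrow> nat) \<Rightarrow> nat \<Rightarrow> nat set set" where
  "Es n D q = {{pv n D p t, pv n D p (Suc t)} | p t. p \<in> Pset n D q \<and> t < D (fst p) (snd p)}"
definition hh :: "nat \<Rightarrow> (nat \<Rightarrow> nat \<Rightarrow> nat) \<Rightarrow> nat \<Rightarrow> nat \<Rightarrow> nat" where
  "hh n D j v = (if v \<le> n then D v j else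
     (let ct = prod_decode (v - n - 1); p = prod_decode (fst ct); t = snd ct in
        min (t + D (fst p) j) (D (fst p) (snd p) - t + D (snd p) j)))"

lemma enc_gt: "enc n p t > n" by (simp add: enc_def)
lemma enc_inj: "enc n p t = enc n p' t' \<longleftrightarrow> p = p' \<and> t = t'"
  unfolding enc_def by (metis add_left_cancel prod_encode_inverse prod.inject)

context
  fixes n :: nat and D :: "nat \<Rightarrow> nat \<Rightarrow> nat" and q :: nat
  assumes dm: "is_dist_matrix n D"
begin

lemma P_props: "p \<in> Pset n D q \<Longrightarrow> fst p \<in> {1..n} \<and> snd p \<in> {1..n} \<and> fst p < snd p \<and> D (fst p) (snd p) \<le> q \<and> D (fst p) (snd p) > 0"
  using dm unfolding Pset_def is_dist_matrix_def by auto

lemma pv_V: assumes p: "p \<in> Pset n D q" and t: "t \<le> D (fst p) (snd p)" shows "pv n D p t \<in> Vs n D q"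
proof -
  consider "t = 0" | "t = D (fst p) (snd p)" | "t \<noteq> 0 \<and> t \<noteq> D (fst p) (snd p)" by blast
  then show ?thesis
  proof cases
    case 3
    then have "t \<in> {1..<D (fst p) (snd p)}" using t by auto
    then have "enc n p t \<in> (\<Union>p\<in>Pset n D q. enc n p ` {1..<D (fst p) (snd p)})" using p by blast
    then show ?thesis using 3 unfolding pv_def Vs_def by auto
  qed (use P_props[OF p] in \<open>auto simp: pv_def Vs_def\<close>)
qed

lemma pv_distinct: "p \<in> Pset n D q \<Longrightarrow> t < D (fst p) (snd p) \<Longrightarrow> pv n D p t \<noteq> pv n D p (Suc t)"
proof -
  assume p: "p \<in> Pset n D q" and t: "t < D (fst p) (snd p)"
  have a: "fst p \<le> n" "snd p \<le> n" "fst p \<noteq> snd p" using P_props[OF p] by auto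
  have g: "\<And>s. enc n p s \<noteq> fst p" "\<And>s. enc n p s \<noteq> snd p" using enc_gt[of n p] a by (metis not_le)+
  have g2: "\<And>s. fst p \<noteq> enc n p s" "\<And>s. snd p \<noteq> enc n p s" using g by metis+
  show ?thesis unfolding pv_def using t a by (simp add: enc_inj g g2)
qed

lemma hh_pv: assumes p: "p \<in> Pset n D q" and t: "t \<le> D (fst p) (snd p)" and j: "j \<in> {1..n}"
  shows "hh n D j (pv n D p t) = min (t + D (fst p) j) (D (fst p) (snd p) - t + D (snd p) j)"
proof -
  obtain a b where ab: "p = (a,b)" by (cases p)
  have pp: "a \<in> {1..n}" "b \<in> {1..n}" "a < b" using P_props[OF p] ab by auto
  have tri1: "D a j \<le> D a b + D b j" and tri2: "D b j \<le> D b a + D a j" and sym: "D b a = D a b"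
    using dm pp j unfolding is_dist_matrix_def by blast+
  show ?thesis
  proof (cases "t = 0")
    case True then show ?thesis using pp ab tri1 by (simp add: pv_def hh_def)
  next
    case False
    show ?thesis
    proof (cases "t = D a b")
      case True then show ?thesis using pp ab tri2 sym False by (simp add: pv_def hh_def)
    next
      case F2: False
      have "pv n D p t = enc n p t" using False F2 ab by (simp add: pv_def)
      moreover have "\<not> enc n p t \<le> n" using enc_gt[of n p t] by simp
      ultimately show ?thesis unfolding hh_def by (simp add: enc_def Let_def)
    qed
  qed
qed

lemma hh_edge: assumes e: "{x,y} \<in> Es n D q" and j: "j \<in> {1..n}"
  shows "hh n D j x \<le> hh n D j y + 1"
proof -
  obtain p t where pt: "p \<in> Pset n D q" "t < D (fst p) (snd p)"
    and xy: "{x,y} = {pv n D p t, pv n D p (Suc t)}"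
    using e unfolding Es_def by blast
  have h1: "hh n D j (pv n D p t) = min (t + D (fst p) j) (D (fst p) (snd p) - t + D (snd p) j)"
    using hh_pv[OF pt(1) _ j] pt(2) by simp
  have h2: "hh n D j (pv n D p (Suc t)) = min (Suc t + D (fst p) j) (D (fst p) (snd p) - Suc t + D (snd p) j)"
    using hh_pv[OF pt(1) _ j] pt(2) by simp
  from xy have "(x = pv n D p t \<and> y = pv n D p (Suc t)) \<or> (x = pv n D p (Suc t) \<and> y = pv n D p t)"
    by (auto simp: doubleton_eq_iff)
  then show ?thesis using h1 h2 pt(2) by auto
qed

lemma walk_hh: assumes j: "j \<in> {1..n}"
  shows "graph_walk (Vs n D q) (Es n D q) xs \<Longrightarrow> hh n D j (hd xs) \<le> hh n D j (last xs) + (length xs - 1)"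
proof (induction xs rule: induct_list012)
  case 1 then show ?case by (simp add: graph_walk_def)
next
  case (2 x) then show ?case by simp
next
  case (3 x y r)
  have ih: "hh n D j y \<le> hh n D j (last (y#r)) + length r" using 3 by (simp add: gw_cons)
  have "hh n D j x \<le> hh n D j y + 1" using 3(3) hh_edge[OF _ j] by (simp add: gw_cons)
  then show ?case using ih by simp
qed

lemma dist_lower: assumes i: "i \<in> {1..n}" and j: "j \<in> {1..n}"
  shows "enat (D i j) \<le> graph_dist (Vs n D q) (Es n D q) i j"
  unfolding graph_dist_def
proof (rule INF_greatest)
  fix xs assume "xs \<in> {xs. graph_walk (Vs n D q) (Es n D q) xs \<and> hd xs = i \<and> last xs = j}"
  then have w: "graph_walk (Vs n D q) (Es n D q) xs" and h: "i = hd xs" "j = last xs" by auto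
  have "hh n D j i \<le> hh n D j j + (length xs - 1)" using walk_hh[OF j w] h by simp
  moreover have "hh n D j i = D i j" "hh n D j j = 0" using i j dm by (auto simp: hh_def is_dist_matrix_def)
  ultimately show "enat (D i j) \<le> enat (length xs - 1)" by simp
qed

lemma edge_in: "p \<in> Pset n D q \<Longrightarrow> t < D (fst p) (snd p) \<Longrightarrow> {pv n D p t, pv n D p (Suc t)} \<in> Es n D q"
  unfolding Es_def by blast

lemma reach_fwd: assumes p: "p \<in> Pset n D q"
  shows "k \<le> D (fst p) (snd p) \<Longrightarrow> reach (Vs n D q) (Es n D q) (pv n D p (D (fst p) (snd p) - k)) (pv n D p (D (fst p) (snd p))) k"
proof (induction k)
  case 0 then show ?case using pv_V[OF p] by (simp add: reach_refl)
next
  case (Suc k)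
  define d where "d = D (fst p) (snd p)"
  have e: "{pv n D p (d - Suc k), pv n D p (Suc (d - Suc k))} \<in> Es n D q"
    using edge_in[OF p] Suc.prems d_def by simp
  have "Suc (d - Suc k) = d - k" using Suc.prems d_def by simp
  then show ?case using reach_cons[OF pv_V[OF p] e] Suc d_def by simp
qed

lemma reach_bwd: assumes p: "p \<in> Pset n D q"
  shows "t \<le> D (fst p) (snd p) \<Longrightarrow> reach (Vs n D q) (Es n D q) (pv n D p t) (pv n D p 0) t"
proof (induction t)
  case 0 then show ?case using pv_V[OF p] by (simp add: reach_refl)
next
  case (Suc t)
  have e: "{pv n D p (Suc t), pv n D p t} \<in> Es n D q"
    using edge_in[OF p, of t] Suc.prems by (simp add: insert_commute)
  show ?case using reach_cons[OF pv_V[OF p Suc.prems] e] Suc by simp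
qed

lemma reach_pair: assumes a: "a \<in> {1..n}" and b: "b \<in> {1..n}" and ab: "a \<noteq> b" and q: "D a b \<le> q"
  shows "reach (Vs n D q) (Es n D q) a b (D a b)"
proof (cases "a < b")
  case True
  have p: "(a,b) \<in> Pset n D q" using a b True q by (simp add: Pset_def)
  show ?thesis using reach_fwd[OF p, of "D a b"] P_props[OF p] by (simp add: pv_def)
next
  case False
  have sym: "D b a = D a b" using dm a b unfolding is_dist_matrix_def by blast
  have p: "(b,a) \<in> Pset n D q" using a b False ab q sym by (simp add: Pset_def)
  show ?thesis using reach_bwd[OF p, of "D b a"] P_props[OF p] sym by (simp add: pv_def)
qed

lemma reach_skel: "skel_walk n D q xs \<Longrightarrow> reach (Vs n D q) (Es n D q) (hd xs) (last xs) (walk_weight D xs)"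
proof (induction xs rule: induct_list012)
  case 1 then show ?case by (simp add: skel_walk_def)
next
  case (2 x) then show ?case by (auto simp: sw_single ww_single Vs_def intro: reach_refl)
next
  case (3 x y r)
  have ih: "reach (Vs n D q) (Es n D q) y (last (y#r)) (walk_weight D (y#r))" using 3 by (simp add: sw_cons)
  have "y \<in> {1..n}" using 3(3) unfolding skel_walk_def by auto
  then have "reach (Vs n D q) (Es n D q) x y (D x y)" using 3(3) by (intro reach_pair) (auto simp: sw_cons)
  from reach_trans[OF this ih] show ?case by (simp add: ww_cons)
qed

end


lemma Pset_finite: "finite (Pset n D q)"
  by (rule finite_subset[of _ "{1..n} \<times> {1..n}"]) (auto simp: Pset_def)

lemma card_Vs: "card (Vs n D q) = n + (\<Sum>p\<in>Pset n D q. D (fst p) (snd p) - 1)"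
proof -
  let ?X = "\<Union>p\<in>Pset n D q. enc n p ` {1..<D (fst p) (snd p)}"
  have fX: "finite ?X" using Pset_finite by auto
  have disj: "{1..n} \<inter> ?X = {}"
  proof (rule ccontr)
    assume "{1..n} \<inter> ?X \<noteq> {}"
    then obtain p t where "enc n p t \<le> n" by auto
    then show False using enc_gt[of n p t] by simp
  qed
  have "card ?X = (\<Sum>p\<in>Pset n D q. card (enc n p ` {1..<D (fst p) (snd p)}))"
    by (rule card_UN_disjoint) (auto simp: Pset_finite enc_inj)
  also have "\<dots> = (\<Sum>p\<in>Pset n D q. D (fst p) (snd p) - 1)"
    by (intro sum.cong refl) (subst card_image, auto simp: inj_on_def enc_inj)
  finally show ?thesis unfolding Vs_def using card_Un_disjoint[OF _ fX disj] by simp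
qed

theorem mainTheorem8:
  fixes n :: nat and D :: "nat \<Rightarrow> nat \<Rightarrow> nat"
  assumes "is_dist_matrix n D"
  shows "\<exists>(V :: nat set) E \<Phi>. graph_realisation n D V E \<Phi> \<and>
    card V \<le> n + (\<Sum>(i, j) \<in> {(i, j). 1 \<le> i \<and> i < j \<and> j \<le> n \<and> 2 \<le> D i j \<and>
                                   D i j \<le> (LEAST q. skel_eq n D q)}. D i j - 1)"
proof -
  note dm = assms
  define q0 where "q0 = (LEAST q. skel_eq n D q)"
  have sk: "skel_eq n D q0" unfolding q0_def using skel_eq_exists[OF dm] by (rule LeastI_ex)
  let ?V = "Vs n D q0" and ?E = "Es n D q0"
  have sg: "simple_graph ?V ?E"
    unfolding simple_graph_def
  proof
    show "finite ?V" unfolding Vs_def using Pset_finite by auto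
    show "\<forall>e\<in>?E. \<exists>a b. a \<noteq> b \<and> a \<in> ?V \<and> b \<in> ?V \<and> e = {a, b}"
    proof
      fix e assume "e \<in> ?E"
      then obtain p t where "p \<in> Pset n D q0" "t < D (fst p) (snd p)" "e = {pv n D p t, pv n D p (Suc t)}"
        unfolding Es_def by blast
      then show "\<exists>a b. a \<noteq> b \<and> a \<in> ?V \<and> b \<in> ?V \<and> e = {a, b}"
        using pv_V[OF dm] pv_distinct[OF dm] by (intro exI conjI) auto
    qed
  qed
  have dist: "graph_dist ?V ?E i j = enat (D i j)" if i: "i \<in> {1..n}" and j: "j \<in> {1..n}" for i j
  proof (rule antisym)
    show "enat (D i j) \<le> graph_dist ?V ?E i j" by (rule dist_lower[OF dm i j])
    have "skel_dist n D q0 i j = enat (D i j)" using sk i j unfolding skel_eq_def by blast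
    then obtain xs where xs: "skel_walk n D q0 xs" "hd xs = i" "last xs = j" "walk_weight D xs = D i j"
      unfolding skel_dist_def using enat_INF_attained by fastforce
    show "graph_dist ?V ?E i j \<le> enat (D i j)"
      using reach_dist[OF reach_skel[OF dm xs(1)]] xs by simp
  qed
  have gr: "graph_realisation n D ?V ?E id"
    unfolding graph_realisation_def using sg dist by (auto simp: Vs_def)
  have "card ?V = n + (\<Sum>p\<in>Pset n D q0. D (fst p) (snd p) - 1)" by (rule card_Vs)
  also have "(\<Sum>p\<in>Pset n D q0. D (fst p) (snd p) - 1) =
     (\<Sum>(i, j) \<in> {(i, j). 1 \<le> i \<and> i < j \<and> j \<le> n \<and> 2 \<le> D i j \<and> D i j \<le> q0}. D i j - 1)"
  proof -
    have "(\<Sum>p\<in>Pset n D q0. D (fst p) (snd p) - 1) = (\<Sum>(i, j) \<in> Pset n D q0. D i j - 1)"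
      by (simp add: case_prod_beta)
    also have "\<dots> = (\<Sum>(i, j) \<in> {(i, j). 1 \<le> i \<and> i < j \<and> j \<le> n \<and> 2 \<le> D i j \<and> D i j \<le> q0}. D i j - 1)"
      by (rule sum.mono_neutral_right) (use Pset_finite[of n D q0] in \<open>auto simp: Pset_def\<close>)
    finally show ?thesis .
  qed
  finally show ?thesis using gr unfolding q0_def by fastforce
qed

end
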